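(* Let $X$ and $Y$ be independent random variables, each symmetric about $0$ (i.e. $X\overset{d}{=}-X$, $Y\overset{d}{=}-Y$). If $|X|\le_{\mathrm{st}}|Y|$, then $$|X|\le_{\mathrm{st}}|\min(X,Y)|\overset{d}{=}|\max(X,Y)|\le_{\mathrm{st}}|Y|.$$ These stochastic inequalities are strict if and only if $|X|<_{\mathrm{st}}|Y|$.
   Context: For random variables $U,V$, $U\le_{\mathrm{st}}V$ means $F_U(x)\ge F_V(x)$ for all real $x$ ($F$ the cdf), and $U<_{\mathrm{st}}V$ means additionally $F_U(x)>F_V(x)$ for at least one $x$. *)

theory Defs
  imports "HOL-Probability.Probability"
begin

definition st_le :: "'a measure \<Rightarrow> ('a \<Rightarrow> real) \<Rightarrow> ('a \<Rightarrow> real) \<Rightarrow> bool" where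
  "st_le M U V \<longleftrightarrow> (\<forall>x::real. cdf (distr M borel V) x \<le> cdf (distr M borel U) x)"

definition st_less :: "'a measure \<Rightarrow> ('a \<Rightarrow> real) \<Rightarrow> ('a \<Rightarrow> real) \<Rightarrow> bool" where
  "st_less M U V \<longleftrightarrow> st_le M U V \<and> (\<exists>x::real. cdf (distr M borel V) x < cdf (distr M borel U) x)"

end

theory Submission
  imports Defs
begin

lemma cdf_distr_eq:
  assumes "prob_space M" "V \<in> borel_measurable M"
  shows "cdf (distr M borel V) x = measure M {\<omega>\<in>space M. V \<omega> \<le> x}"
  using assms unfolding cdf_def
  by (subst measure_distr) (auto intro!: arg_cong[where f="measure M"])

lemma indep_prod:
  assumes "prob_space M" "prob_space.indep_var M borel X borel Y"
    and "A \<in> sets borel" "B \<in> sets borel"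
  shows "measure M {\<omega>\<in>space M. X \<omega> \<in> A \<and> Y \<omega> \<in> B}
     = measure M {\<omega>\<in>space M. X \<omega> \<in> A} * measure M {\<omega>\<in>space M. Y \<omega> \<in> B}"
proof -
  interpret prob_space M by fact
  have I: "indep_set (sigma_sets (space M) { X -` A \<inter> space M | A. A \<in> sets borel})
      (sigma_sets (space M) { Y -` A \<inter> space M | A. A \<in> sets borel})"
    using assms(2) indep_var_eq by blast
  have "prob ((X -` A \<inter> space M) \<inter> (Y -` B \<inter> space M)) = prob (X -` A \<inter> space M) * prob (Y -` B \<inter> space M)"
    by (rule indep_setD[OF I]) (use assms in auto)
  moreover have "(X -` A \<inter> space M) \<inter> (Y -` B \<inter> space M) = {\<omega>\<in>space M. X \<omega> \<in> A \<and> Y \<omega> \<in> B}" by auto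
  moreover have "X -` A \<inter> space M = {\<omega>\<in>space M. X \<omega> \<in> A}" "Y -` B \<inter> space M = {\<omega>\<in>space M. Y \<omega> \<in> B}" by auto
  ultimately show ?thesis by simp
qed

lemma symm_prob:
  fixes t :: real
  assumes "prob_space M" "X \<in> borel_measurable M"
    and "distr M borel X = distr M borel (\<lambda>\<omega>. - X \<omega>)"
  shows "measure M {\<omega>\<in>space M. X \<omega> > t} = measure M {\<omega>\<in>space M. X \<omega> < -t}"
proof -
  have o: "{(t::real)<..} \<in> sets (borel::real measure)" by (intro borel_open) simp
  have "measure (distr M borel X) {t<..} = measure (distr M borel (\<lambda>\<omega>. - X \<omega>)) {t<..}"
    using assms(3) by simp
  moreover have "measure (distr M borel X) {t<..} = measure M {\<omega>\<in>space M. X \<omega> > t}"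
    using assms o by (subst measure_distr) (auto intro!: arg_cong[where f="measure M"])
  moreover have "measure (distr M borel (\<lambda>\<omega>. - X \<omega>)) {t<..} = measure M {\<omega>\<in>space M. X \<omega> < -t}"
    using assms o by (subst measure_distr) (auto intro!: arg_cong[where f="measure M"])
  ultimately show ?thesis by simp
qed

lemma meas_diff:
  assumes "prob_space M" "{\<omega>\<in>space M. P \<omega>} \<in> sets M" "{\<omega>\<in>space M. Q \<omega>} \<in> sets M"
    "\<And>\<omega>. Q \<omega> \<Longrightarrow> P \<omega>"
  shows "measure M {\<omega>\<in>space M. P \<omega> \<and> \<not> Q \<omega>} = measure M {\<omega>\<in>space M. P \<omega>} - measure M {\<omega>\<in>space M. Q \<omega>}"
proof -
  interpret prob_space M by fact
  have "{\<omega>\<in>space M. P \<omega> \<and> \<not> Q \<omega>} = {\<omega>\<in>space M. P \<omega>} - {\<omega>\<in>space M. Q \<omega>}" by auto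
  then show ?thesis using assms by (simp add: finite_measure_Diff subset_eq)
qed

lemma meas_compl:
  assumes "prob_space M" "{\<omega>\<in>space M. P \<omega>} \<in> sets M"
  shows "measure M {\<omega>\<in>space M. \<not> P \<omega>} = 1 - measure M {\<omega>\<in>space M. P \<omega>}"
proof -
  interpret prob_space M by fact
  have "{\<omega>\<in>space M. \<not> P \<omega>} = space M - {\<omega>\<in>space M. P \<omega>}" by auto
  then show ?thesis using assms by (simp add: prob_compl)
qed

lemma cdf_abs_neg:
  assumes "prob_space M" "V \<in> borel_measurable M" "(t::real) < 0"
  shows "cdf (distr M borel (\<lambda>\<omega>. \<bar>V \<omega>\<bar>)) t = 0"
proof -
  have e: "{\<omega>\<in>space M. \<bar>V \<omega>\<bar> \<le> t} = {}" using assms(3) by auto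
  have "cdf (distr M borel (\<lambda>\<omega>. \<bar>V \<omega>\<bar>)) t = measure M {\<omega>\<in>space M. \<bar>V \<omega>\<bar> \<le> t}"
    using assms by (intro cdf_distr_eq) auto
  also have "\<dots> = 0" by (simp only: e) simp
  finally show ?thesis .
qed

lemma cdf_mid:
  fixes t :: real and M :: "'a measure" and X Y :: "'a \<Rightarrow> real"
  assumes "prob_space M"
    and "X \<in> borel_measurable M" and "Y \<in> borel_measurable M"
    and "prob_space.indep_var M borel X borel Y"
    and "distr M borel X = distr M borel (\<lambda>\<omega>. - X \<omega>)"
    and "distr M borel Y = distr M borel (\<lambda>\<omega>. - Y \<omega>)"
  shows "cdf (distr M borel (\<lambda>\<omega>. \<bar>min (X \<omega>) (Y \<omega>)\<bar>)) t
    = (cdf (distr M borel (\<lambda>\<omega>. \<bar>X \<omega>\<bar>)) t + cdf (distr M borel (\<lambda>\<omega>. \<bar>Y \<omega>\<bar>)) t) / 2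
    \<and> cdf (distr M borel (\<lambda>\<omega>. \<bar>max (X \<omega>) (Y \<omega>)\<bar>)) t
    = (cdf (distr M borel (\<lambda>\<omega>. \<bar>X \<omega>\<bar>)) t + cdf (distr M borel (\<lambda>\<omega>. \<bar>Y \<omega>\<bar>)) t) / 2"
proof -
  interpret prob_space M by fact
  note [measurable] = assms(2,3)
  show ?thesis
  proof (cases "t < 0")
    case True
    then show ?thesis using cdf_abs_neg[OF assms(1)] assms(2,3) by simp
  next
    case False
    define a where "a = prob {\<omega>\<in>space M. X \<omega> > t}"
    define b where "b = prob {\<omega>\<in>space M. Y \<omega> > t}"
    have sa: "prob {\<omega>\<in>space M. X \<omega> < -t} = a"
      unfolding a_def using symm_prob[OF assms(1,2,5)] by simp
    have sb: "prob {\<omega>\<in>space M. Y \<omega> < -t} = b"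
      unfolding b_def using symm_prob[OF assms(1,3,6)] by simp
    have ca: "prob {\<omega>\<in>space M. X \<omega> \<le> t} = 1 - a"
      using meas_compl[OF assms(1), of "\<lambda>\<omega>. X \<omega> > t"] unfolding a_def by (simp add: not_less)
    have cb: "prob {\<omega>\<in>space M. Y \<omega> \<le> t} = 1 - b"
      using meas_compl[OF assms(1), of "\<lambda>\<omega>. Y \<omega> > t"] unfolding b_def by (simp add: not_less)
    have ca': "prob {\<omega>\<in>space M. X \<omega> \<ge> -t} = 1 - a"
      using meas_compl[OF assms(1), of "\<lambda>\<omega>. X \<omega> < -t"] sa by (simp add: not_less)
    have cb': "prob {\<omega>\<in>space M. Y \<omega> \<ge> -t} = 1 - b"
      using meas_compl[OF assms(1), of "\<lambda>\<omega>. Y \<omega> < -t"] sb by (simp add: not_less)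
    have FX: "cdf (distr M borel (\<lambda>\<omega>. \<bar>X \<omega>\<bar>)) t = 1 - 2 * a"
    proof -
      have "cdf (distr M borel (\<lambda>\<omega>. \<bar>X \<omega>\<bar>)) t = prob {\<omega>\<in>space M. X \<omega> \<le> t \<and> \<not> X \<omega> < -t}"
        by (subst cdf_distr_eq[OF assms(1)]) (auto intro!: arg_cong[where f=prob])
      also have "\<dots> = (1 - a) - a" using meas_diff[OF assms(1), of "\<lambda>\<omega>. X \<omega> \<le> t" "\<lambda>\<omega>. X \<omega> < -t"] ca sa False by simp
      finally show ?thesis by simp
    qed
    have FY: "cdf (distr M borel (\<lambda>\<omega>. \<bar>Y \<omega>\<bar>)) t = 1 - 2 * b"
    proof -
      have "cdf (distr M borel (\<lambda>\<omega>. \<bar>Y \<omega>\<bar>)) t = prob {\<omega>\<in>space M. Y \<omega> \<le> t \<and> \<not> Y \<omega> < -t}"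
        by (subst cdf_distr_eq[OF assms(1)]) (auto intro!: arg_cong[where f=prob])
      also have "\<dots> = (1 - b) - b" using meas_diff[OF assms(1), of "\<lambda>\<omega>. Y \<omega> \<le> t" "\<lambda>\<omega>. Y \<omega> < -t"] cb sb False by simp
      finally show ?thesis by simp
    qed
    have Fmin: "cdf (distr M borel (\<lambda>\<omega>. \<bar>min (X \<omega>) (Y \<omega>)\<bar>)) t = 1 - a - b"
    proof -
      have "cdf (distr M borel (\<lambda>\<omega>. \<bar>min (X \<omega>) (Y \<omega>)\<bar>)) t
         = prob {\<omega>\<in>space M. (X \<omega> \<in> {-t..} \<and> Y \<omega> \<in> {-t..}) \<and> \<not> (X \<omega> \<in> {t<..} \<and> Y \<omega> \<in> {t<..})}"
        by (subst cdf_distr_eq[OF assms(1)]) (auto intro!: arg_cong[where f=prob])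
      also have "\<dots> = prob {\<omega>\<in>space M. X \<omega> \<in> {-t..} \<and> Y \<omega> \<in> {-t..}} - prob {\<omega>\<in>space M. X \<omega> \<in> {t<..} \<and> Y \<omega> \<in> {t<..}}"
        using False by (intro meas_diff[OF assms(1)]) auto
      also have "\<dots> = (1-a)*(1-b) - a * b"
        using indep_prod[OF assms(1,4), of "{-t..}" "{-t..}"] indep_prod[OF assms(1,4), of "{t<..}" "{t<..}"]
          ca' cb' a_def b_def by simp
      finally show ?thesis by (simp add: algebra_simps)
    qed
    have Fmax: "cdf (distr M borel (\<lambda>\<omega>. \<bar>max (X \<omega>) (Y \<omega>)\<bar>)) t = 1 - a - b"
    proof -
      have "cdf (distr M borel (\<lambda>\<omega>. \<bar>max (X \<omega>) (Y \<omega>)\<bar>)) t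
         = prob {\<omega>\<in>space M. (X \<omega> \<in> {..t} \<and> Y \<omega> \<in> {..t}) \<and> \<not> (X \<omega> \<in> {..< -t} \<and> Y \<omega> \<in> {..< -t})}"
        by (subst cdf_distr_eq[OF assms(1)]) (auto intro!: arg_cong[where f=prob])
      also have "\<dots> = prob {\<omega>\<in>space M. X \<omega> \<in> {..t} \<and> Y \<omega> \<in> {..t}} - prob {\<omega>\<in>space M. X \<omega> \<in> {..< -t} \<and> Y \<omega> \<in> {..< -t}}"
        using False by (intro meas_diff[OF assms(1)]) auto
      also have "\<dots> = (1-a)*(1-b) - a * b"
        using indep_prod[OF assms(1,4), of "{..t}" "{..t}"] indep_prod[OF assms(1,4), of "{..< -t}" "{..< -t}"]
          ca cb sa sb by simp
      finally show ?thesis by (simp add: algebra_simps)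
    qed
    show ?thesis using FX FY Fmin Fmax by simp
  qed
qed

lemma aux_arith:
  fixes f g k :: "real \<Rightarrow> real"
  assumes le: "\<And>x. g x \<le> f x" and k: "\<And>x. k x = (f x + g x) / 2"
  shows "(\<forall>x. k x \<le> f x) \<and> True \<and> (\<forall>x. g x \<le> k x)
    \<and> ((\<forall>x. k x \<le> f x) \<and> (\<exists>x. k x < f x) \<longleftrightarrow> (\<forall>x. g x \<le> f x) \<and> (\<exists>x. g x < f x))
    \<and> ((\<forall>x. g x \<le> k x) \<and> (\<exists>x. g x < k x) \<longleftrightarrow> (\<forall>x. g x \<le> f x) \<and> (\<exists>x. g x < f x))"
  using le by (auto simp: k)

theorem theorem5p1:
  fixes M :: "'a measure" and X Y :: "'a \<Rightarrow> real"
  assumes "prob_space M"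
    and "X \<in> borel_measurable M" and "Y \<in> borel_measurable M"
    and "prob_space.indep_var M borel X borel Y"
    and "distr M borel X = distr M borel (\<lambda>\<omega>. - X \<omega>)"
    and "distr M borel Y = distr M borel (\<lambda>\<omega>. - Y \<omega>)"
    and "st_le M (\<lambda>\<omega>. \<bar>X \<omega>\<bar>) (\<lambda>\<omega>. \<bar>Y \<omega>\<bar>)"
  shows "st_le M (\<lambda>\<omega>. \<bar>X \<omega>\<bar>) (\<lambda>\<omega>. \<bar>min (X \<omega>) (Y \<omega>)\<bar>)
       \<and> distr M borel (\<lambda>\<omega>. \<bar>min (X \<omega>) (Y \<omega>)\<bar>) = distr M borel (\<lambda>\<omega>. \<bar>max (X \<omega>) (Y \<omega>)\<bar>)
       \<and> st_le M (\<lambda>\<omega>. \<bar>max (X \<omega>) (Y \<omega>)\<bar>) (\<lambda>\<omega>. \<bar>Y \<omega>\<bar>)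
       \<and> (st_less M (\<lambda>\<omega>. \<bar>X \<omega>\<bar>) (\<lambda>\<omega>. \<bar>min (X \<omega>) (Y \<omega>)\<bar>)
            \<longleftrightarrow> st_less M (\<lambda>\<omega>. \<bar>X \<omega>\<bar>) (\<lambda>\<omega>. \<bar>Y \<omega>\<bar>))
       \<and> (st_less M (\<lambda>\<omega>. \<bar>max (X \<omega>) (Y \<omega>)\<bar>) (\<lambda>\<omega>. \<bar>Y \<omega>\<bar>)
            \<longleftrightarrow> st_less M (\<lambda>\<omega>. \<bar>X \<omega>\<bar>) (\<lambda>\<omega>. \<bar>Y \<omega>\<bar>))"
proof -
  interpret prob_space M by fact
  let ?F = "\<lambda>V t. cdf (distr M borel V) t"
  have mid: "\<And>t. ?F (\<lambda>\<omega>. \<bar>min (X \<omega>) (Y \<omega>)\<bar>) t = (?F (\<lambda>\<omega>. \<bar>X \<omega>\<bar>) t + ?F (\<lambda>\<omega>. \<bar>Y \<omega>\<bar>) t) / 2"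
     "\<And>t. ?F (\<lambda>\<omega>. \<bar>max (X \<omega>) (Y \<omega>)\<bar>) t = (?F (\<lambda>\<omega>. \<bar>X \<omega>\<bar>) t + ?F (\<lambda>\<omega>. \<bar>Y \<omega>\<bar>) t) / 2"
    using cdf_mid[OF assms(1-6)] by auto
  have le: "\<And>t. ?F (\<lambda>\<omega>. \<bar>Y \<omega>\<bar>) t \<le> ?F (\<lambda>\<omega>. \<bar>X \<omega>\<bar>) t"
    using assms(7) unfolding st_le_def by auto
  have eq: "distr M borel (\<lambda>\<omega>. \<bar>min (X \<omega>) (Y \<omega>)\<bar>) = distr M borel (\<lambda>\<omega>. \<bar>max (X \<omega>) (Y \<omega>)\<bar>)"
  proof (rule cdf_unique)
    show "real_distribution (distr M borel (\<lambda>\<omega>. \<bar>min (X \<omega>) (Y \<omega>)\<bar>))"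
      using assms(2,3) by (intro real_distribution_distr) measurable
    show "real_distribution (distr M borel (\<lambda>\<omega>. \<bar>max (X \<omega>) (Y \<omega>)\<bar>))"
      using assms(2,3) by (intro real_distribution_distr) measurable
    show "cdf (distr M borel (\<lambda>\<omega>. \<bar>min (X \<omega>) (Y \<omega>)\<bar>)) = cdf (distr M borel (\<lambda>\<omega>. \<bar>max (X \<omega>) (Y \<omega>)\<bar>))"
      by (rule ext) (simp only: mid)
  qed
  show ?thesis
    unfolding st_less_def st_le_def eq
    using aux_arith[of "?F (\<lambda>\<omega>. \<bar>Y \<omega>\<bar>)" "?F (\<lambda>\<omega>. \<bar>X \<omega>\<bar>)" "?F (\<lambda>\<omega>. \<bar>max (X \<omega>) (Y \<omega>)\<bar>)", OF le mid(2)] by blast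
qed

end
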